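(* Let $\Phi$ be a Young function, $\varphi\in\mathcal{G}^{\rm dec}_2$ and $p\ge1$, and assume $\Phi(t)\lesssim t^p$ for $t\ge1$ and $r^{-n/p}\lesssim\varphi(r)$ for $r>0$. Suppose that a diffeomorphism $\psi:\mathbb{R}^n\to\mathbb{R}^n$ induces a bounded composition operator $C_\psi$ from $\mathcal{M}_\Phi^\varphi(\mathbb{R}^n)$ to itself. Then there is a constant $C>0$ such that for all $x_0\in\mathbb{R}^n$ and all $f\in\mathcal{M}_\Phi^\varphi(\mathbb{R}^n)$, \[ \|f(D\psi(x_0)\,\cdot)\|_{\mathcal{M}_\Phi^\varphi}\le C\|f\|_{\mathcal{M}_\Phi^\varphi}. \]
   Context: A Young function is a convex $\Phi:[0,\infty)\to[0,\infty)$ with $\Phi(0)=0$, $\lim_{t\to\infty}\Phi(t)=\infty$. $\mathcal{G}^{\rm dec}_2$ is the set of $\varphi:(0,\infty)\to(0,\infty)$ that are almost decreasing (there is $C>0$ with $C\varphi(r)\ge\varphi(s)$ for $r<s$), submultiplicative ($\varphi(rs)\le C\varphi(r)\varphi(s)$), satisfy $\lim_{r\to0}\varphi(r)=\infty$, $\lim_{r\to\infty}\varphi(r)=0$, and $\varphi(1/r)\le C/\varphi(r)$ for some $C>0$. $g\lesssim h$ means $g\le Ch$ for a constant $C>0$. For a ball $B=B(a,r)$: $\|f\|_{\Phi,B}=\inf\{\lambda>0:\frac1{|B|}\int_B\Phi(|f|/\lambda)\le1\}$, $\|f\|_{\mathcal{M}_\Phi^\varphi}=\sup_{a,r}\frac1{\varphi(r)}\|f\|_{\Phi,B(a,r)}$,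 $\mathcal{M}_\Phi^\varphi(\mathbb{R}^n)$ the space of measurable $f$ with finite norm. A diffeomorphism is a bijection $\psi$ with $\psi,\psi^{-1}$ differentiable; $D\psi(x_0)$ is its Jacobi matrix at $x_0$; $C_\psi f=f\circ\psi$. *)

theory Defs
  imports "HOL-Analysis.Analysis"
begin

definition young_function :: "(real \<Rightarrow> real) \<Rightarrow> bool" where
  "young_function \<Phi> \<longleftrightarrow>
     convex_on {0..} \<Phi> \<and> (\<forall>t\<ge>0. \<Phi> t \<ge> 0) \<and> \<Phi> 0 = 0 \<and> filterlim \<Phi> at_top at_top"

definition G_dec_2 :: "(real \<Rightarrow> real) \<Rightarrow> bool" where
  "G_dec_2 \<phi> \<longleftrightarrow>
     (\<forall>r>0. \<phi> r > 0) \<and>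
     (\<exists>C>0. \<forall>r s. 0 < r \<and> r < s \<longrightarrow> \<phi> s \<le> C * \<phi> r) \<and>
     (\<exists>C>0. \<forall>r>0. \<forall>s>0. \<phi> (r * s) \<le> C * \<phi> r * \<phi> s) \<and>
     filterlim \<phi> at_top (at_right 0) \<and>
     (\<phi> \<longlongrightarrow> 0) at_top \<and>
     (\<exists>C>0. \<forall>r>0. \<phi> (1 / r) \<le> C / \<phi> r)"

text \<open>Luxemburg-type average norm on a set B (value in [0,oo]; oo if no lambda works).\<close>
definition orlicz_avg_norm :: "(real \<Rightarrow> real) \<Rightarrow> ('a::euclidean_space \<Rightarrow> real) \<Rightarrow> 'a set \<Rightarrow> ennreal" where
  "orlicz_avg_norm \<Phi> f B =
     Inf {ennreal l | l. l > 0 \<and>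
          (\<integral>\<^sup>+ x\<in>B. ennreal (\<Phi> (\<bar>f x\<bar> / l)) \<partial>lebesgue) / emeasure lebesgue B \<le> 1}"

definition orlicz_morrey_norm :: "(real \<Rightarrow> real) \<Rightarrow> (real \<Rightarrow> real) \<Rightarrow> ('a::euclidean_space \<Rightarrow> real) \<Rightarrow> ennreal" where
  "orlicz_morrey_norm \<Phi> \<phi> f =
     (SUP ar \<in> {(a, r). r > (0::real)}. orlicz_avg_norm \<Phi> f (ball (fst ar) (snd ar)) / ennreal (\<phi> (snd ar)))"

definition orlicz_morrey_space :: "(real \<Rightarrow> real) \<Rightarrow> (real \<Rightarrow> real) \<Rightarrow> ('a::euclidean_space \<Rightarrow> real) set" where
  "orlicz_morrey_space \<Phi> \<phi> = {f. f \<in> borel_measurable lebesgue \<and> orlicz_morrey_norm \<Phi> \<phi> f < \<infinity>}"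

definition diffeomorphism :: "('a::euclidean_space \<Rightarrow> 'a) \<Rightarrow> bool" where
  "diffeomorphism \<psi> \<longleftrightarrow> bij \<psi> \<and> (\<forall>x. \<psi> differentiable (at x)) \<and> (\<forall>x. inv \<psi> differentiable (at x))"

end

theory Submission
  imports Defs
begin

lemma young_mono:
  assumes Y: "young_function \<Phi>" and s: "0 \<le> s" "s \<le> t"
  shows "\<Phi> s \<le> \<Phi> t"
proof (cases "s = t")
  case True then show ?thesis by simp
next
  case False
  with s have t: "t > 0" by simp
  have cv: "convex_on {0..} \<Phi>" and nn: "\<forall>t\<ge>0. \<Phi> t \<ge> 0" and z: "\<Phi> 0 = 0"
    using Y by (auto simp: young_function_def)
  have "\<Phi> ((1 - s/t) *\<^sub>R 0 + (s/t) *\<^sub>R t) \<le> (1 - s/t) * \<Phi> 0 + (s/t) * \<Phi> t"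
    using t s by (intro convex_onD[OF cv]) (auto simp: field_simps)
  also have "\<dots> = (s/t) * \<Phi> t" using z by simp
  also have "\<dots> \<le> \<Phi> t" using t s nn by (intro mult_left_le_one_le) auto
  finally show ?thesis using t by simp
qed

lemma young_nonneg: "young_function \<Phi> \<Longrightarrow> 0 \<le> t \<Longrightarrow> 0 \<le> \<Phi> t"
  by (auto simp: young_function_def)

lemma young_borel:
  assumes Y: "young_function \<Phi>"
  shows "(\<lambda>x. \<Phi> (max 0 x)) \<in> borel_measurable borel"
proof (rule borel_measurable_mono)
  show "mono (\<lambda>x. \<Phi> (max 0 x))"
    by (auto simp: mono_def intro!: young_mono[OF Y])
qed

lemma young_comp_measurable:
  assumes Y: "young_function \<Phi>" and g: "g \<in> borel_measurable M" and l: "l \<ge> 0"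
  shows "(\<lambda>x. \<Phi> (\<bar>g x\<bar> / l)) \<in> borel_measurable M"
proof -
  have l: "(\<lambda>x. \<Phi> (\<bar>g x\<bar> / l)) = (\<lambda>x. \<Phi> (max 0 (\<bar>g x\<bar> / l)))"
    using l by (auto simp: max_def)
  show ?thesis unfolding l
    by (rule measurable_compose[OF _ young_borel[OF Y]]) (use g in measurable)
qed

definition avgQ :: "(real \<Rightarrow> real) \<Rightarrow> ('a::euclidean_space \<Rightarrow> real) \<Rightarrow> 'a set \<Rightarrow> real \<Rightarrow> ennreal" where
  "avgQ \<Phi> g B l = (\<integral>\<^sup>+ x\<in>B. ennreal (\<Phi> (\<bar>g x\<bar> / l)) \<partial>lebesgue) / emeasure lebesgue B"

lemma norm_lt:
  assumes Y: "young_function \<Phi>" and lt: "orlicz_avg_norm \<Phi> g B < ennreal L" and L: "L > 0"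
  shows "avgQ \<Phi> g B L \<le> 1"
proof -
  from lt obtain s where s: "s \<in> {ennreal l | l. l > 0 \<and>
          (\<integral>\<^sup>+ x\<in>B. ennreal (\<Phi> (\<bar>g x\<bar> / l)) \<partial>lebesgue) / emeasure lebesgue B \<le> 1}" "s < ennreal L"
    unfolding orlicz_avg_norm_def by (auto simp: Inf_less_iff)
  then obtain l where l: "l > 0" "s = ennreal l" 
     "(\<integral>\<^sup>+ x\<in>B. ennreal (\<Phi> (\<bar>g x\<bar> / l)) \<partial>lebesgue) / emeasure lebesgue B \<le> 1" by auto
  with s have lL: "l < L" using L by (simp add: ennreal_less_iff)
  have "(\<integral>\<^sup>+ x\<in>B. ennreal (\<Phi> (\<bar>g x\<bar> / L)) \<partial>lebesgue) \<le> (\<integral>\<^sup>+ x\<in>B. ennreal (\<Phi> (\<bar>g x\<bar> / l)) \<partial>lebesgue)"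
  proof (intro nn_integral_mono mult_right_mono)
    fix x
    have "\<bar>g x\<bar> / L \<le> \<bar>g x\<bar> / l" using l lL by (intro divide_left_mono) auto
    then show "ennreal (\<Phi> (\<bar>g x\<bar> / L)) \<le> ennreal (\<Phi> (\<bar>g x\<bar> / l))"
      using L by (intro ennreal_leI young_mono[OF Y]) auto
  qed simp
  then have "avgQ \<Phi> g B L \<le> (\<integral>\<^sup>+ x\<in>B. ennreal (\<Phi> (\<bar>g x\<bar> / l)) \<partial>lebesgue) / emeasure lebesgue B"
    unfolding avgQ_def by (rule divide_right_mono_ennreal)
  with l(3) show ?thesis by simp
qed

lemma norm_le:
  assumes L0: "L0 \<ge> 0" and H: "\<And>L. L > L0 \<Longrightarrow> avgQ \<Phi> g B L \<le> 1"
  shows "orlicz_avg_norm \<Phi> g B \<le> ennreal L0"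
proof (rule ennreal_le_epsilon)
  fix e :: real assume e: "0 < e"
  have "orlicz_avg_norm \<Phi> g B \<le> ennreal (L0 + e)"
    unfolding orlicz_avg_norm_def
  proof (rule Inf_lower, rule CollectI, rule exI[of _ "L0+e"])
    show "ennreal (L0 + e) = ennreal (L0 + e) \<and> 0 < L0 + e \<and>
      (\<integral>\<^sup>+ x\<in>B. ennreal (\<Phi> (\<bar>g x\<bar> / (L0 + e))) \<partial>lebesgue) / emeasure lebesgue B \<le> 1"
      using H[of "L0 + e"] e L0 unfolding avgQ_def by (simp del: ennreal_plus)
  qed
  then show "orlicz_avg_norm \<Phi> g B \<le> ennreal L0 + ennreal e"
    using e L0 by (simp add: ennreal_plus[symmetric] del: ennreal_plus)
qed

lemma morrey_ball:
  assumes "r > 0" "\<phi> r > 0"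
  shows "orlicz_avg_norm \<Phi> g (ball a r) \<le> ennreal (\<phi> r) * orlicz_morrey_norm \<Phi> \<phi> g"
proof -
  have "orlicz_avg_norm \<Phi> g (ball a r) / ennreal (\<phi> r) \<le> orlicz_morrey_norm \<Phi> \<phi> g"
    unfolding orlicz_morrey_norm_def
    by (rule SUP_upper2[of "(a, r)"]) (use assms in auto)
  then have "ennreal (\<phi> r) * (orlicz_avg_norm \<Phi> g (ball a r) / ennreal (\<phi> r)) \<le> ennreal (\<phi> r) * orlicz_morrey_norm \<Phi> \<phi> g"
    by (rule mult_left_mono) simp
  moreover have "ennreal (\<phi> r) * (orlicz_avg_norm \<Phi> g (ball a r) / ennreal (\<phi> r)) = orlicz_avg_norm \<Phi> g (ball a r)"
    using assms by (metis ennreal_times_divide mult.commute ennreal_mult_divide_eq ennreal_eq_0_iff ennreal_neq_top not_le order_refl)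
  ultimately show ?thesis by simp
qed

lemma morrey_le:
  assumes pos: "\<And>r. r > 0 \<Longrightarrow> \<phi> r > 0"
    and H: "\<And>a r. r > 0 \<Longrightarrow> orlicz_avg_norm \<Phi> g (ball a r) \<le> ennreal (\<phi> r) * X"
  shows "orlicz_morrey_norm \<Phi> \<phi> g \<le> X"
  unfolding orlicz_morrey_norm_def
proof (rule SUP_least, clarsimp)
  fix a r assume r: "(0::real) < r"
  show "orlicz_avg_norm \<Phi> g (ball a r) / ennreal (\<phi> r) \<le> X"
    using H[OF r] pos[OF r] by (intro divide_le_posI_ennreal) auto
qed

lemma nn_integral_lebesgue_affine:
  fixes F :: "'a::euclidean_space \<Rightarrow> ennreal"
  assumes F[measurable]: "F \<in> borel_measurable lebesgue" and c: "c \<noteq> 0"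
  shows "(\<integral>\<^sup>+x. F x \<partial>lebesgue) = ennreal (\<bar>c\<bar> ^ DIM('a)) * (\<integral>\<^sup>+x. F (t + c *\<^sub>R x) \<partial>lebesgue)"
proof -
  have T: "(\<lambda>x. t + (\<Sum>j\<in>Basis. (c * (x \<bullet> j)) *\<^sub>R j)) = (\<lambda>x::'a. t + c *\<^sub>R x)"
    unfolding scaleR_scaleR[symmetric] scaleR_sum_right[symmetric] euclidean_representation by simp
  have leb: "lebesgue = density (distr lebesgue lebesgue (\<lambda>x::'a. t + c *\<^sub>R x)) (\<lambda>_. ennreal (\<bar>c\<bar> ^ DIM('a)))"
    using lebesgue_affine_euclidean[where c="\<lambda>_::'a. c" and t=t] c unfolding T
    by (simp add: prod_constant)
  have meas: "(\<lambda>x::'a. t + c *\<^sub>R x) \<in> lebesgue \<rightarrow>\<^sub>M lebesgue"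
    using lebesgue_affine_measurable[where c="\<lambda>_::'a. c" and t=t] c unfolding T by simp
  have "(\<integral>\<^sup>+x. F x \<partial>lebesgue) = (\<integral>\<^sup>+x. F x \<partial>density (distr lebesgue lebesgue (\<lambda>x::'a. t + c *\<^sub>R x)) (\<lambda>_. ennreal (\<bar>c\<bar> ^ DIM('a))))"
    by (subst leb) simp
  also have "\<dots> = \<integral>\<^sup>+ x. ennreal (\<bar>c\<bar> ^ DIM('a)) * F x \<partial>distr lebesgue lebesgue (\<lambda>x. t + c *\<^sub>R x)"
    by (subst nn_integral_density) auto
  also have "\<dots> = ennreal (\<bar>c\<bar> ^ DIM('a)) * integral\<^sup>N (distr lebesgue lebesgue (\<lambda>x. t + c *\<^sub>R x)) F"
    using F measurable_distr_eq1 nn_integral_cmult by blast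
  also have "\<dots> = ennreal (\<bar>c\<bar> ^ DIM('a)) * (\<integral>\<^sup>+x. F (t + c *\<^sub>R x) \<partial>lebesgue)"
    using meas by (subst nn_integral_distr) auto
  finally show ?thesis .
qed

lemma indicator_ball_affine:
  fixes b :: "'a::real_normed_vector"
  assumes "c > 0"
  shows "indicator (ball (t + c *\<^sub>R b) (c * s)) (t + c *\<^sub>R x) = (indicator (ball b s) x :: ennreal)"
proof -
  have "dist (t + c *\<^sub>R b) (t + c *\<^sub>R x) = c * dist b x"
    using assms by (simp add: dist_norm scaleR_diff_right[symmetric])
  then show ?thesis using assms by (simp add: indicator_def)
qed

lemma avg_affine:
  fixes F :: "'a::euclidean_space \<Rightarrow> ennreal"
  assumes F[measurable]: "F \<in> borel_measurable lebesgue" and c: "c > 0"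
  shows "(\<integral>\<^sup>+x\<in>ball b s. F (t + c *\<^sub>R x) \<partial>lebesgue) / emeasure lebesgue (ball b s)
       = (\<integral>\<^sup>+x\<in>ball (t + c *\<^sub>R b) (c * s). F x \<partial>lebesgue) / emeasure lebesgue (ball (t + c *\<^sub>R b) (c * s))"
proof -
  let ?k = "ennreal (\<bar>c\<bar> ^ DIM('a))"
  have k: "?k \<noteq> 0" "?k \<noteq> \<infinity>" using c by simp_all
  have [measurable]: "ball (t + c *\<^sub>R b) (c * s) \<in> sets lebesgue" by (simp add: fmeasurableD lmeasurable_ball)
  have m1: "(\<lambda>x. F x * indicator (ball (t + c *\<^sub>R b) (c * s)) x) \<in> borel_measurable lebesgue" by measurable
  have m2: "(\<lambda>x. indicator (ball (t + c *\<^sub>R b) (c * s)) x :: ennreal) \<in> borel_measurable lebesgue" by measurable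
  have A: "(\<integral>\<^sup>+x\<in>ball (t + c *\<^sub>R b) (c * s). F x \<partial>lebesgue) = ?k * (\<integral>\<^sup>+x\<in>ball b s. F (t + c *\<^sub>R x) \<partial>lebesgue)"
    apply (subst nn_integral_lebesgue_affine[OF m1, where c=c and t=t])
    using c apply simp
    apply (simp only: indicator_ball_affine[OF c])
    done
  have B: "emeasure lebesgue (ball (t + c *\<^sub>R b) (c * s)) = ?k * emeasure lebesgue (ball b s)"
  proof -
    have "emeasure lebesgue (ball (t + c *\<^sub>R b) (c * s)) = (\<integral>\<^sup>+x. indicator (ball (t + c *\<^sub>R b) (c * s)) x \<partial>lebesgue)"
      by simp
    also have "\<dots> = ?k * (\<integral>\<^sup>+x. indicator (ball b s) x \<partial>lebesgue)"
      apply (subst nn_integral_lebesgue_affine[OF m2, where c=c and t=t])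
    using c apply simp
    apply (simp only: indicator_ball_affine[OF c])
    done
    finally show ?thesis by (simp add: fmeasurableD lmeasurable_ball)
  qed
  show ?thesis unfolding A B
    by (subst (1 2) mult.commute) (rule divide_mult_eq[OF k, symmetric])
qed

lemma orlicz_avg_norm_affine:
  fixes g :: "'a::euclidean_space \<Rightarrow> real"
  assumes Y: "young_function \<Phi>" and g[measurable]: "g \<in> borel_measurable lebesgue" and c: "c > 0"
  shows "orlicz_avg_norm \<Phi> (\<lambda>x. g (t + c *\<^sub>R x)) (ball b s) = orlicz_avg_norm \<Phi> g (ball (t + c *\<^sub>R b) (c * s))"
proof -
  have eq: "(\<integral>\<^sup>+x\<in>ball b s. ennreal (\<Phi> (\<bar>g (t + c *\<^sub>R x)\<bar> / l)) \<partial>lebesgue) / emeasure lebesgue (ball b s)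
       = (\<integral>\<^sup>+x\<in>ball (t + c *\<^sub>R b) (c * s). ennreal (\<Phi> (\<bar>g x\<bar> / l)) \<partial>lebesgue) / emeasure lebesgue (ball (t + c *\<^sub>R b) (c * s))"
    if "l > 0" for l
    using that c by (intro avg_affine[where F="\<lambda>x. ennreal (\<Phi> (\<bar>g x\<bar> / l))"])
       (auto intro!: measurable_compose[OF young_comp_measurable[OF Y g] measurable_ennreal])
  then show ?thesis unfolding orlicz_avg_norm_def
    by (intro arg_cong[where f=Inf] Collect_cong ex_cong1 conj_cong refl) (simp add: eq)
qed

lemma borel_to_leb:
  fixes f :: "'a::euclidean_space \<Rightarrow> 'b::topological_space"
  assumes "f \<in> borel_measurable borel"
  shows "f \<in> borel_measurable lebesgue"
proof -
  have "f \<in> borel_measurable lborel" using assms by simp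
  then show ?thesis by (rule measurable_completion)
qed

lemma ennreal_div_le_one:
  fixes a b :: ennreal
  assumes "a / b \<le> 1" "b \<noteq> 0" "b \<noteq> \<infinity>"
  shows "a \<le> b"
proof -
  have "a = (a / b) * b" using assms
    by (simp add: ennreal_divide_times ennreal_divide_self less_top)
  also have "\<dots> \<le> 1 * b" using assms(1) by (rule mult_right_mono) simp
  finally show ?thesis by simp
qed

lemma emeasure_ball_pos_fin:
  fixes a :: "'a::euclidean_space"
  assumes "r > 0"
  shows "emeasure lebesgue (ball a r) \<noteq> 0" "emeasure lebesgue (ball a r) \<noteq> \<infinity>"
proof -
  have "emeasure lebesgue (ball a r) = emeasure lborel (ball a r)"
    by (simp add: emeasure_completion)
  also have "\<dots> = ennreal (r ^ DIM('a) * unit_ball_vol (real DIM('a)))"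
    using assms by (simp add: emeasure_ball)
  finally have e: "emeasure lebesgue (ball a r) = ennreal (r ^ DIM('a) * unit_ball_vol (real DIM('a)))" .
  have "r ^ DIM('a) * unit_ball_vol (real DIM('a)) > 0" using assms by simp
  then show "emeasure lebesgue (ball a r) \<noteq> 0" "emeasure lebesgue (ball a r) \<noteq> \<infinity>"
  proof -
    have "unit_ball_vol (real DIM('a)) > 0" by simp
    then have pos: "r ^ DIM('a) * unit_ball_vol (real DIM('a)) > 0" using assms by simp
    show "emeasure lebesgue (ball a r) \<noteq> 0" unfolding e ennreal_eq_0_iff using pos by linarith
    show "emeasure lebesgue (ball a r) \<noteq> \<infinity>" unfolding e by simp
  qed
qed

lemma ennreal_mult3:
  assumes "x \<ge> 0" "y \<ge> 0" "z \<ge> 0"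
  shows "ennreal x * (ennreal y * (ennreal z * M)) = ennreal (x * y * z) * M"
proof -
  have "ennreal (x * y * z) = ennreal (x * y) * ennreal z"
    by (rule ennreal_mult) (use assms in auto)
  also have "ennreal (x * y) = ennreal x * ennreal y"
    by (rule ennreal_mult) (use assms in auto)
  finally show ?thesis by (simp only: mult.assoc)
qed

lemma zoom_bound:
  fixes \<Phi> \<phi> :: "real \<Rightarrow> real" and \<psi> :: "'a::euclidean_space \<Rightarrow> 'a" and f :: "'a \<Rightarrow> real"
  assumes Y: "young_function \<Phi>"
    and pos: "\<And>r. r > 0 \<Longrightarrow> \<phi> r > 0"
    and C1: "C1 > 0" "\<And>r s. r > 0 \<Longrightarrow> s > 0 \<Longrightarrow> \<phi> (r * s) \<le> C1 * \<phi> r * \<phi> s"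
    and C3: "C3 > 0" "\<And>r. r > 0 \<Longrightarrow> \<phi> (1 / r) \<le> C3 / \<phi> r"
    and Cp: "Cp > 0" "\<forall>f \<in> orlicz_morrey_space \<Phi> \<phi>.
           f \<circ> \<psi> \<in> orlicz_morrey_space \<Phi> \<phi> \<and>
           orlicz_morrey_norm \<Phi> \<phi> (f \<circ> \<psi>) \<le> ennreal Cp * orlicz_morrey_norm \<Phi> \<phi> f"
    and psi_cont: "continuous_on UNIV \<psi>"
    and fb[measurable]: "f \<in> borel_measurable borel"
    and fin: "orlicz_morrey_norm \<Phi> \<phi> f < \<infinity>"
    and t: "t > 0" and r: "r > 0" and L: "L > 0"
    and LK: "ennreal (C1 * C1 * C3 * Cp * \<phi> r) * orlicz_morrey_norm \<Phi> \<phi> f < ennreal L"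
  shows "(\<integral>\<^sup>+x\<in>ball a r. ennreal (\<Phi> (\<bar>f (h + (1/t) *\<^sub>R (\<psi> (x0 + t *\<^sub>R x) - \<psi> x0))\<bar> / L)) \<partial>lebesgue)
           \<le> emeasure lebesgue (ball a r)"
proof -
  define M where "M = orlicz_morrey_norm \<Phi> \<phi> f"
  define \<beta> where "\<beta> = h - (1/t) *\<^sub>R \<psi> x0"
  define f1 where "f1 = (\<lambda>y. f (\<beta> + (1/t) *\<^sub>R y))"
  have f1b[measurable]: "f1 \<in> borel_measurable borel" unfolding f1_def by measurable
  have ft: "\<phi> t > 0" using pos t by simp
  have f1ball: "orlicz_avg_norm \<Phi> f1 (ball b s) \<le> ennreal (\<phi> s) * (ennreal (C1 * C3 / \<phi> t) * M)"
    if s: "s > 0" for b s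
  proof -
    have "orlicz_avg_norm \<Phi> f1 (ball b s) = orlicz_avg_norm \<Phi> f (ball (\<beta> + (1/t) *\<^sub>R b) ((1/t) * s))"
      unfolding f1_def using t by (intro orlicz_avg_norm_affine[OF Y borel_to_leb[OF fb]]) simp
    also have "\<dots> \<le> ennreal (\<phi> ((1/t) * s)) * M"
      unfolding M_def using t s pos by (intro morrey_ball) auto
    also have "\<dots> \<le> ennreal (\<phi> s * (C1 * C3 / \<phi> t)) * M"
    proof (intro mult_right_mono ennreal_leI)
      have "\<phi> ((1/t) * s) \<le> C1 * \<phi> (1/t) * \<phi> s" using C1(2)[of "1/t" s] t s by simp
      also have "\<dots> \<le> C1 * (C3 / \<phi> t) * \<phi> s"
        using C1 C3 t s pos by (intro mult_right_mono mult_left_mono) (auto simp: less_imp_le)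
      finally show "\<phi> ((1/t) * s) \<le> \<phi> s * (C1 * C3 / \<phi> t)" by (simp add: field_simps)
    qed simp
    also have "\<dots> = ennreal (\<phi> s) * (ennreal (C1 * C3 / \<phi> t) * M)"
    proof -
      have "ennreal (\<phi> s * (C1 * C3 / \<phi> t)) = ennreal (\<phi> s) * ennreal (C1 * C3 / \<phi> t)"
        using pos[OF s] ft C1 C3 by (intro ennreal_mult) auto
      then show ?thesis by (simp add: mult.assoc)
    qed
    finally show ?thesis .
  qed
  have nf1: "orlicz_morrey_norm \<Phi> \<phi> f1 \<le> ennreal (C1 * C3 / \<phi> t) * M"
    by (rule morrey_le[OF pos f1ball])
  have f1sp: "f1 \<in> orlicz_morrey_space \<Phi> \<phi>"
    unfolding orlicz_morrey_space_def using borel_to_leb[OF f1b] nf1 fin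
    by (auto simp: M_def ennreal_mult_less_top intro: le_less_trans)
  have nf2: "orlicz_morrey_norm \<Phi> \<phi> (f1 \<circ> \<psi>) \<le> ennreal Cp * (ennreal (C1 * C3 / \<phi> t) * M)"
    using Cp(2) f1sp nf1 by (meson mult_left_mono order_trans zero_le)
  have psib[measurable]: "\<psi> \<in> borel_measurable borel"
    using psi_cont by (rule borel_measurable_continuous_onI)
  have f2b[measurable]: "(f1 \<circ> \<psi>) \<in> borel_measurable borel" by measurable
  have "orlicz_avg_norm \<Phi> (f1 \<circ> \<psi>) (ball (x0 + t *\<^sub>R a) (t * r)) \<le> ennreal (\<phi> (t * r)) * orlicz_morrey_norm \<Phi> \<phi> (f1 \<circ> \<psi>)"
    using t r pos by (intro morrey_ball) auto
  also have "\<dots> \<le> ennreal (C1 * \<phi> t * \<phi> r) * (ennreal Cp * (ennreal (C1 * C3 / \<phi> t) * M))"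
    using C1 t r by (intro mult_mono nf2 ennreal_leI) auto
  also have "\<dots> = ennreal (C1 * C1 * C3 * Cp * \<phi> r) * M"
  proof -
    have "C1 * \<phi> t * \<phi> r * Cp * (C1 * C3 / \<phi> t) = C1 * C1 * C3 * Cp * \<phi> r"
      using ft by (simp add: field_simps)
    moreover have "ennreal (C1 * \<phi> t * \<phi> r) * (ennreal Cp * (ennreal (C1 * C3 / \<phi> t) * M))
       = ennreal (C1 * \<phi> t * \<phi> r * Cp * (C1 * C3 / \<phi> t)) * M"
      using C1 C3 Cp ft pos[OF r] by (intro ennreal_mult3) auto
    ultimately show ?thesis by simp
  qed
  also have "\<dots> < ennreal L" using LK unfolding M_def .
  finally have A1: "avgQ \<Phi> (f1 \<circ> \<psi>) (ball (x0 + t *\<^sub>R a) (t * r)) L \<le> 1"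
    by (rule norm_lt[OF Y _ L])
  moreover have A2: "avgQ \<Phi> (f1 \<circ> \<psi>) (ball (x0 + t *\<^sub>R a) (t * r)) L =
     (\<integral>\<^sup>+x\<in>ball a r. ennreal (\<Phi> (\<bar>(f1 \<circ> \<psi>) (x0 + t *\<^sub>R x)\<bar> / L)) \<partial>lebesgue) / emeasure lebesgue (ball a r)"
    unfolding avgQ_def using t L
    by (intro avg_affine[symmetric] measurable_compose[OF young_comp_measurable[OF Y borel_to_leb[OF f2b]] measurable_ennreal]) auto
  moreover have A3: "(f1 \<circ> \<psi>) (x0 + t *\<^sub>R x) = f (h + (1/t) *\<^sub>R (\<psi> (x0 + t *\<^sub>R x) - \<psi> x0))" for x
    unfolding f1_def \<beta>_def by (simp add: algebra_simps)
  ultimately have "(\<integral>\<^sup>+x\<in>ball a r. ennreal (\<Phi> (\<bar>f (h + (1/t) *\<^sub>R (\<psi> (x0 + t *\<^sub>R x) - \<psi> x0))\<bar> / L)) \<partial>lebesgue) / emeasure lebesgue (ball a r) \<le> 1"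
    by (simp only: A3)
  then show ?thesis
    by (rule ennreal_div_le_one[OF _ emeasure_ball_pos_fin[OF r, of a]])
qed

lemma ball_borel[measurable]: "ball (c::'a::euclidean_space) r \<in> sets borel" by simp
lemma ball_lebesgue[measurable]: "ball (c::'a::euclidean_space) r \<in> sets lebesgue" by (simp add: fmeasurableD lmeasurable_ball)

lemma sphere_null: "sphere (c::'a::euclidean_space) r \<in> null_sets lborel"
  using negligible_sphere[of c r]
  by (auto simp: null_sets_completion_iff negligible_iff_null_sets negligible_convex_frontier)

lemma ball_integral_cont:
  fixes H :: "'a::euclidean_space \<Rightarrow> real"
  assumes H[measurable]: "H \<in> borel_measurable borel" and bnd: "\<And>z. \<bar>H z\<bar> \<le> N"
  shows "continuous (at c0) (\<lambda>c. LINT z|lborel. H z * indicator (ball c r) z)"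
proof (rule continuous_at_sequentiallyI)
  fix u assume u: "u \<longlonglongrightarrow> c0"
  have "bounded (range u)" using u by (rule convergent_imp_bounded)
  then obtain D where D: "\<And>n. dist c0 (u n) \<le> D" by (auto simp: bounded_any_center[of _ c0])
  have N0: "N \<ge> 0" using bnd[of 0] by simp
  let ?w = "\<lambda>z. N * indicator (ball c0 (r + D)) z :: real"
  show "(\<lambda>n. LINT z|lborel. H z * indicator (ball (u n) r) z) \<longlonglongrightarrow> (LINT z|lborel. H z * indicator (ball c0 r) z)"
  proof (rule integral_dominated_convergence[where w="?w"])
    have fin: "emeasure lborel (ball c0 (r + D)) < \<infinity>" by (rule emeasure_bounded_finite) simp
    show "integrable lborel ?w"
      by (intro integrable_mult_right integrable_real_indicator) (use fin in auto)
    show "(\<lambda>z. H z * indicator (ball c0 r) z) \<in> borel_measurable lborel" by measurable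
    show "(\<lambda>z. H z * indicator (ball (u n) r) z) \<in> borel_measurable lborel" for n by measurable
    show "AE z in lborel. norm (H z * indicator (ball (u n) r) z) \<le> ?w z" for n
    proof (rule AE_I2)
      fix z
      show "norm (H z * indicator (ball (u n) r) z) \<le> ?w z"
      proof (cases "z \<in> ball (u n) r")
        case True
        then have "dist c0 z < r + D" using D[of n] dist_triangle[of c0 z "u n"] by (simp add: dist_commute)
        then show ?thesis using True bnd[of z] by (simp add: indicator_def)
      next
        case False
        then show ?thesis using N0 by (simp add: indicator_def)
      qed
    qed
    show "AE z in lborel. (\<lambda>n. H z * indicator (ball (u n) r) z) \<longlonglongrightarrow> H z * indicator (ball c0 r) z"
    proof (rule AE_I'[OF sphere_null[of c0 r]], safe)
      fix z assume nc: "\<not> (\<lambda>n. H z * indicator (ball (u n) r) z) \<longlonglongrightarrow> H z * indicator (ball c0 r) z"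
      have du: "(\<lambda>n. dist (u n) z) \<longlonglongrightarrow> dist c0 z"
        using u by (intro tendsto_dist) auto
      show "z \<in> sphere c0 r"
      proof (rule ccontr)
        assume "z \<notin> sphere c0 r"
        then consider "dist c0 z < r" | "dist c0 z > r" by (force simp: sphere_def)
        then show False
        proof cases
          case 1
          have "eventually (\<lambda>n. dist (u n) z < r) sequentially"
            by (rule order_tendstoD(2)[OF du 1])
          then have "eventually (\<lambda>n. H z * indicator (ball (u n) r) z = H z * indicator (ball c0 r) z) sequentially"
            by eventually_elim (use 1 in \<open>simp add: indicator_def dist_commute\<close>)
          then have "(\<lambda>n. H z * indicator (ball (u n) r) z) \<longlonglongrightarrow> H z * indicator (ball c0 r) z"
            by (rule tendsto_eventually)
          with nc show False by blast
        next
          case 2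
          have "eventually (\<lambda>n. dist (u n) z > r) sequentially"
            by (rule order_tendstoD(1)[OF du 2])
          then have "eventually (\<lambda>n. H z * indicator (ball (u n) r) z = H z * indicator (ball c0 r) z) sequentially"
            by eventually_elim (use 2 in \<open>simp add: indicator_def dist_commute\<close>)
          then have "(\<lambda>n. H z * indicator (ball (u n) r) z) \<longlonglongrightarrow> H z * indicator (ball c0 r) z"
            by (rule tendsto_eventually)
          with nc show False by blast
        qed
      qed
    qed
  qed
qed

definition avgG :: "('a::euclidean_space \<Rightarrow> real) \<Rightarrow> real \<Rightarrow> 'a \<Rightarrow> real" where
  "avgG G e y = (LINT z|lborel. G z * indicator (ball y e) z) / measure lborel (ball (0::'a) e)"

lemma avgG_cont:
  fixes G :: "'a::euclidean_space \<Rightarrow> real"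
  assumes G[measurable]: "G \<in> borel_measurable borel" and bnd: "\<And>z. \<bar>G z\<bar> \<le> N"
    and e: "e > 0"
  shows "continuous (at y) (avgG G e)"
  unfolding avgG_def
  by (intro continuous_intros ball_integral_cont[OF G bnd]) (use e in simp)

lemma ball_measure_pos:
  assumes "e > 0"
  shows "measure lborel (ball (c::'a::euclidean_space) e) > 0"
    "emeasure lborel (ball (c::'a::euclidean_space) e) = ennreal (measure lborel (ball c e))"
proof -
  have fin: "emeasure lborel (ball c e) < \<infinity>" by (rule emeasure_bounded_finite) simp
  then show e: "emeasure lborel (ball (c::'a::euclidean_space) e) = ennreal (measure lborel (ball c e))"
    by (intro emeasure_eq_ennreal_measure) simp
  have "emeasure lborel (ball c e) = emeasure lebesgue (ball c e)" by (simp add: emeasure_completion)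
  then have "emeasure lborel (ball c e) \<noteq> 0" using emeasure_ball_pos_fin[OF assms, of c] by simp
  then show "measure lborel (ball c e) > 0" using e
    by (metis ennreal_0 measure_nonneg order_le_less)
qed

lemma indicator_ball_shift: "indicator (ball y e) (y + h) = (indicator (ball 0 e) h :: 'b::zero_neq_one)"
  for y h :: "'a::real_normed_vector"
  by (simp add: indicator_def dist_norm)

lemma nn_integral_shift:
  fixes F :: "'a::euclidean_space \<Rightarrow> ennreal"
  assumes [measurable]: "F \<in> borel_measurable borel"
  shows "(\<integral>\<^sup>+z. F z \<partial>lborel) = (\<integral>\<^sup>+h. F (y + h) \<partial>lborel)"
proof -
  have "(\<integral>\<^sup>+z. F z \<partial>lborel) = (\<integral>\<^sup>+z. F z \<partial>distr lborel borel ((+) y))"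
    by (simp add: lborel_distr_plus)
  also have "\<dots> = (\<integral>\<^sup>+h. F (y + h) \<partial>lborel)"
    by (subst nn_integral_distr) auto
  finally show ?thesis .
qed

lemma avgG_nn:
  fixes G :: "'a::euclidean_space \<Rightarrow> real"
  assumes G[measurable]: "G \<in> borel_measurable borel" and nn: "\<And>z. G z \<ge> 0" and bnd: "\<And>z. G z \<le> N"
    and e: "e > 0"
  shows "ennreal (avgG G e y) = ennreal (1 / measure lborel (ball (0::'a) e)) *
           (\<integral>\<^sup>+h. ennreal (G (y + h)) * indicator (ball 0 e) h \<partial>lborel)"
proof -
  let ?V = "measure lborel (ball (0::'a) e)"
  have V: "?V > 0" using ball_measure_pos[OF e] by simp
  have fin: "emeasure lborel (ball y e) < \<infinity>" by (rule emeasure_bounded_finite) simp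
  have int: "integrable lborel (\<lambda>z. G z * indicator (ball y e) z)"
  proof (rule Bochner_Integration.integrable_bound)
    show "integrable lborel (\<lambda>z. N * indicator (ball y e) z :: real)"
      by (intro integrable_mult_right integrable_real_indicator) (use fin in auto)
    show "AE z in lborel. norm (G z * indicator (ball y e) z) \<le> norm (N * indicator (ball y e) z :: real)"
    proof (intro AE_I2)
      fix z
      have N0: "N \<ge> 0" using nn[of z] bnd[of z] by linarith
      show "norm (G z * indicator (ball y e) z) \<le> norm (N * indicator (ball y e) z :: real)"
        using nn[of z] bnd[of z] N0 by (simp add: indicator_def)
    qed
  qed measurable
  have "(\<integral>\<^sup>+z. ennreal (G z * indicator (ball y e) z) \<partial>lborel) = ennreal (LINT z|lborel. G z * indicator (ball y e) z)"
    using nn by (intro nn_integral_eq_integral[OF int]) auto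
  moreover have "(\<integral>\<^sup>+z. ennreal (G z * indicator (ball y e) z) \<partial>lborel) = (\<integral>\<^sup>+h. ennreal (G (y + h)) * indicator (ball 0 e) h \<partial>lborel)"
  proof -
    have "(\<integral>\<^sup>+z. ennreal (G z * indicator (ball y e) z) \<partial>lborel) = (\<integral>\<^sup>+h. ennreal (G (y + h) * indicator (ball y e) (y + h)) \<partial>lborel)"
      by (rule nn_integral_shift) measurable
    also have "\<dots> = (\<integral>\<^sup>+h. ennreal (G (y + h)) * indicator (ball 0 e) h \<partial>lborel)"
      by (intro nn_integral_cong) (simp add: indicator_def dist_norm)
    finally show ?thesis .
  qed
  moreover have "ennreal (avgG G e y) = ennreal (1 / ?V) * ennreal (LINT z|lborel. G z * indicator (ball y e) z)"
  proof -
    have "LINT z|lborel. G z * indicator (ball y e) z \<ge> 0"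
      using nn by (intro integral_nonneg_AE AE_I2) (simp add: indicator_def)
    then show ?thesis unfolding avgG_def using V
      by (subst ennreal_mult[symmetric]) auto
  qed
  ultimately show ?thesis by simp
qed

lemma avgG_tonelli:
  fixes G :: "'a::euclidean_space \<Rightarrow> real" and \<Theta> :: "'a \<Rightarrow> 'a" and W :: "'a \<Rightarrow> ennreal"
  assumes G[measurable]: "G \<in> borel_measurable borel" and nn: "\<And>z. G z \<ge> 0" and bnd: "\<And>z. G z \<le> N"
    and e: "e > 0" and Th[measurable]: "\<Theta> \<in> borel_measurable borel" and W[measurable]: "W \<in> borel_measurable borel"
  shows "(\<integral>\<^sup>+x. W x * ennreal (avgG G e (\<Theta> x)) \<partial>lborel) = ennreal (1 / measure lborel (ball (0::'a) e)) *
          (\<integral>\<^sup>+h. indicator (ball 0 e) h * (\<integral>\<^sup>+x. W x * ennreal (G (\<Theta> x + h)) \<partial>lborel) \<partial>lborel)"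
proof -
  let ?c = "ennreal (1 / measure lborel (ball (0::'a) e))"
  have "(\<integral>\<^sup>+x. W x * ennreal (avgG G e (\<Theta> x)) \<partial>lborel) =
        (\<integral>\<^sup>+x. ?c * (\<integral>\<^sup>+h. W x * ennreal (G (\<Theta> x + h)) * indicator (ball 0 e) h \<partial>lborel) \<partial>lborel)"
  proof (intro nn_integral_cong)
    fix x
    have "W x * ennreal (avgG G e (\<Theta> x)) = W x * (?c * (\<integral>\<^sup>+h. ennreal (G (\<Theta> x + h)) * indicator (ball 0 e) h \<partial>lborel))"
      by (simp only: avgG_nn[OF G nn bnd e])
    also have "\<dots> = ?c * (W x * (\<integral>\<^sup>+h. ennreal (G (\<Theta> x + h)) * indicator (ball 0 e) h \<partial>lborel))"
      by (simp only: mult.left_commute)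
    also have "W x * (\<integral>\<^sup>+h. ennreal (G (\<Theta> x + h)) * indicator (ball 0 e) h \<partial>lborel) =
       (\<integral>\<^sup>+h. W x * ennreal (G (\<Theta> x + h)) * indicator (ball 0 e) h \<partial>lborel)"
      by (subst nn_integral_cmult[symmetric]) (simp_all add: mult.assoc)
    finally show "W x * ennreal (avgG G e (\<Theta> x)) = ?c * (\<integral>\<^sup>+h. W x * ennreal (G (\<Theta> x + h)) * indicator (ball 0 e) h \<partial>lborel)" .
  qed
  also have "\<dots> = ?c * (\<integral>\<^sup>+x. (\<integral>\<^sup>+h. W x * ennreal (G (\<Theta> x + h)) * indicator (ball 0 e) h \<partial>lborel) \<partial>lborel)"
    by (rule nn_integral_cmult) measurable
  also have "(\<integral>\<^sup>+x. (\<integral>\<^sup>+h. W x * ennreal (G (\<Theta> x + h)) * indicator (ball 0 e) h \<partial>lborel) \<partial>lborel)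
      = (\<integral>\<^sup>+h. (\<integral>\<^sup>+x. W x * ennreal (G (\<Theta> x + h)) * indicator (ball 0 e) h \<partial>lborel) \<partial>lborel)"
    by (rule lborel_pair.Fubini'[symmetric]) measurable
  also have "\<dots> = (\<integral>\<^sup>+h. indicator (ball 0 e) h * (\<integral>\<^sup>+x. W x * ennreal (G (\<Theta> x + h)) \<partial>lborel) \<partial>lborel)"
  proof (intro nn_integral_cong)
    fix h
    show "(\<integral>\<^sup>+x. W x * ennreal (G (\<Theta> x + h)) * indicator (ball 0 e) h \<partial>lborel) =
          indicator (ball 0 e) h * (\<integral>\<^sup>+x. W x * ennreal (G (\<Theta> x + h)) \<partial>lborel)"
    proof -
      have m: "(\<lambda>x. W x * ennreal (G (\<Theta> x + h))) \<in> borel_measurable lborel" by measurable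
      show ?thesis by (subst nn_integral_multc[OF m]) (rule mult.commute)
    qed
  qed
  finally show ?thesis .
qed

lemma avgG_tonelli_le:
  fixes G :: "'a::euclidean_space \<Rightarrow> real" and \<Theta> :: "'a \<Rightarrow> 'a" and W :: "'a \<Rightarrow> ennreal"
  assumes G[measurable]: "G \<in> borel_measurable borel" and nn: "\<And>z. G z \<ge> 0" and bnd: "\<And>z. G z \<le> N"
    and e: "e > 0" and Th[measurable]: "\<Theta> \<in> borel_measurable borel" and W[measurable]: "W \<in> borel_measurable borel"
    and le: "\<And>h. (\<integral>\<^sup>+x. W x * ennreal (G (\<Theta> x + h)) \<partial>lborel) \<le> Bd"
  shows "(\<integral>\<^sup>+x. W x * ennreal (avgG G e (\<Theta> x)) \<partial>lborel) \<le> Bd"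
proof -
  let ?V = "measure lborel (ball (0::'a) e)"
  have V: "?V > 0" "emeasure lborel (ball (0::'a) e) = ennreal ?V" using ball_measure_pos[OF e] by auto
  have i: "(\<integral>\<^sup>+h. indicator (ball 0 e) h * (\<integral>\<^sup>+x. W x * ennreal (G (\<Theta> x + h)) \<partial>lborel) \<partial>lborel)
     \<le> (\<integral>\<^sup>+h. indicator (ball (0::'a) e) h * Bd \<partial>lborel)"
    by (intro nn_integral_mono mult_left_mono le) simp
  have "(\<integral>\<^sup>+x. W x * ennreal (avgG G e (\<Theta> x)) \<partial>lborel) \<le> ennreal (1 / ?V) * (\<integral>\<^sup>+h. indicator (ball (0::'a) e) h * Bd \<partial>lborel)"
    unfolding avgG_tonelli[OF G nn bnd e Th W]
    by (rule mult_left_mono[OF i]) simp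
  also have "\<dots> = ennreal (1 / ?V) * (ennreal ?V * Bd)"
    by (subst nn_integral_multc) (simp_all add: V)
  also have "\<dots> = Bd"
  proof -
    have "ennreal (1 / ?V) * ennreal ?V = 1" using V
      by (subst ennreal_mult[symmetric]) auto
    then show ?thesis by (simp add: mult.assoc[symmetric])
  qed
  finally show ?thesis .
qed

lemma ball_nn:
  fixes H :: "'a::euclidean_space \<Rightarrow> real"
  assumes H[measurable]: "H \<in> borel_measurable borel" and nn: "\<And>z. H z \<ge> 0" and bnd: "\<And>z. H z \<le> N"
  shows "(\<integral>\<^sup>+z. indicator (ball c r) z * ennreal (H z) \<partial>lborel) = ennreal (LINT z|lborel. H z * indicator (ball c r) z)"
proof -
  have fin: "emeasure lborel (ball c r) < \<infinity>" by (rule emeasure_bounded_finite) simp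
  have int: "integrable lborel (\<lambda>z. H z * indicator (ball c r) z)"
  proof (rule Bochner_Integration.integrable_bound)
    show "integrable lborel (\<lambda>z. N * indicator (ball c r) z :: real)"
      by (intro integrable_mult_right integrable_real_indicator) (use fin in auto)
    show "AE z in lborel. norm (H z * indicator (ball c r) z) \<le> norm (N * indicator (ball c r) z :: real)"
    proof (intro AE_I2)
      fix z
      have N0: "N \<ge> 0" using nn[of z] bnd[of z] by linarith
      show "norm (H z * indicator (ball c r) z) \<le> norm (N * indicator (ball c r) z :: real)"
        using nn[of z] bnd[of z] N0 by (simp add: indicator_def)
    qed
  qed measurable
  have "(\<integral>\<^sup>+z. ennreal (H z * indicator (ball c r) z) \<partial>lborel) = ennreal (LINT z|lborel. H z * indicator (ball c r) z)"
    using nn by (intro nn_integral_eq_integral[OF int]) auto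
  moreover have "(\<integral>\<^sup>+z. ennreal (H z * indicator (ball c r) z) \<partial>lborel) = (\<integral>\<^sup>+z. indicator (ball c r) z * ennreal (H z) \<partial>lborel)"
    by (intro nn_integral_cong) (simp add: indicator_def)
  ultimately show ?thesis by simp
qed

lemma core_limit:
  fixes G :: "'a::euclidean_space \<Rightarrow> real" and A B :: "'a \<Rightarrow> 'a" and \<Theta> :: "nat \<Rightarrow> 'a \<Rightarrow> 'a"
  assumes G[measurable]: "G \<in> borel_measurable borel" and nn: "\<And>z. G z \<ge> 0" and bnd: "\<And>z. G z \<le> N"
    and A: "bounded_linear A" and B: "bounded_linear B" and AB: "\<And>h. A (B h) = h"
    and Th[measurable]: "\<And>k. \<Theta> k \<in> borel_measurable borel"
    and lim: "\<And>x. (\<lambda>k. \<Theta> k x) \<longlonglongrightarrow> A x"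
    and hyp: "\<And>k h. (\<integral>\<^sup>+x. indicator (ball a r) x * ennreal (G (\<Theta> k x + h)) \<partial>lborel) \<le> emeasure lborel (ball a r)"
    and r: "r > 0"
  shows "(\<integral>\<^sup>+x. indicator (ball a r) x * ennreal (G (A x)) \<partial>lborel) \<le> emeasure lborel (ball a r)"
proof -
  let ?W = "\<lambda>x. indicator (ball a r) x :: ennreal"
  have Ab[measurable]: "A \<in> borel_measurable borel"
    using A by (intro borel_measurable_continuous_onI continuous_at_imp_continuous_on) (auto intro: linear_continuous_at)
  have step1: "(\<integral>\<^sup>+x. ?W x * ennreal (avgG G e (A x)) \<partial>lborel) \<le> emeasure lborel (ball a r)" if e: "e > 0" for e
  proof -
    have cont: "isCont (avgG G e) y" for y
      using avgG_cont[OF G _ e] nn bnd by (metis abs_of_nonneg)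
    have avb[measurable]: "avgG G e \<in> borel_measurable borel"
      using cont by (intro borel_measurable_continuous_onI continuous_at_imp_continuous_on) auto
    let ?u = "\<lambda>k x. ?W x * ennreal (avgG G e (\<Theta> k x))"
    have "(\<integral>\<^sup>+x. ?W x * ennreal (avgG G e (A x)) \<partial>lborel) = (\<integral>\<^sup>+x. liminf (\<lambda>k. ?u k x) \<partial>lborel)"
    proof (intro nn_integral_cong)
      fix x
      have "(\<lambda>k. avgG G e (\<Theta> k x)) \<longlonglongrightarrow> avgG G e (A x)"
        by (rule isCont_tendsto_compose[OF cont lim])
      then have "(\<lambda>k. ?u k x) \<longlonglongrightarrow> ?W x * ennreal (avgG G e (A x))"
        by (intro tendsto_mult_ennreal tendsto_const tendsto_ennrealI) (auto simp: indicator_def)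
      then show "?W x * ennreal (avgG G e (A x)) = liminf (\<lambda>k. ?u k x)"
        by (simp add: lim_imp_Liminf)
    qed
    also have "\<dots> \<le> liminf (\<lambda>k. \<integral>\<^sup>+x. ?u k x \<partial>lborel)"
      by (rule nn_integral_liminf) measurable
    also have "\<dots> \<le> limsup (\<lambda>k. \<integral>\<^sup>+x. ?u k x \<partial>lborel)"
      by (rule Liminf_le_Limsup) simp
    also have "\<dots> \<le> emeasure lborel (ball a r)"
    proof (rule Limsup_bounded, rule always_eventually, rule allI)
      fix k
      show "(\<integral>\<^sup>+x. ?u k x \<partial>lborel) \<le> emeasure lborel (ball a r)"
        by (rule avgG_tonelli_le[OF G nn bnd e Th]) (auto intro: hyp)
    qed
    finally show ?thesis .
  qed
  define g where "g h = (LINT y|lborel. G (A y) * indicator (ball (a + B h) r) y)" for h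
  have GA[measurable]: "(\<lambda>y. G (A y)) \<in> borel_measurable borel" by measurable
  have step2: "(\<integral>\<^sup>+x. ?W x * ennreal (G (A x + h)) \<partial>lborel) = ennreal (g h)" for h
  proof -
    have "ennreal (g h) = (\<integral>\<^sup>+y. indicator (ball (a + B h) r) y * ennreal (G (A y)) \<partial>lborel)"
      unfolding g_def by (rule ball_nn[OF GA nn bnd, symmetric])
    also have "\<dots> = (\<integral>\<^sup>+x. indicator (ball (a + B h) r) (B h + x) * ennreal (G (A (B h + x))) \<partial>lborel)"
      by (rule nn_integral_shift) measurable
    also have "\<dots> = (\<integral>\<^sup>+x. ?W x * ennreal (G (A x + h)) \<partial>lborel)"
    proof (intro nn_integral_cong)
      fix x
      have "A (B h + x) = A x + h" using AB[of h] linear_add[OF bounded_linear.linear[OF A]] by (simp add: add.commute)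
      moreover have "dist (a + B h) (B h + x) = dist a x" by (simp add: dist_norm algebra_simps)
      ultimately show "indicator (ball (a + B h) r) (B h + x) * ennreal (G (A (B h + x))) = ?W x * ennreal (G (A x + h))"
        by (simp add: indicator_def)
    qed
    finally show ?thesis by simp
  qed
  have gcont: "isCont g 0"
  proof -
    have c1: "isCont (\<lambda>c. LINT y|lborel. G (A y) * indicator (ball c r) y) (a + B 0)"
      using ball_integral_cont[OF GA, of N] nn bnd by (metis abs_of_nonneg)
    have c2: "isCont (\<lambda>h. a + B h) 0"
      using B by (intro continuous_intros linear_continuous_at)
    show ?thesis unfolding g_def
      using isCont_o2[OF c2 c1] by simp
  qed
  have B0: "B 0 = 0" using linear_0[OF bounded_linear.linear[OF B]] .
  define T0 where "T0 = g 0"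
  define Vb where "Vb = measure lborel (ball a r)"
  have Vb: "emeasure lborel (ball a r) = ennreal Vb" "Vb > 0" unfolding Vb_def using ball_measure_pos[OF r] by auto
  have lhs: "(\<integral>\<^sup>+x. ?W x * ennreal (G (A x)) \<partial>lborel) = ennreal T0"
    unfolding T0_def using step2[of 0] by simp
  have "T0 \<le> Vb"
  proof (rule ccontr)
    assume "\<not> T0 \<le> Vb"
    then have eta: "(T0 - Vb) / 2 > 0" by simp
    obtain d where d: "d > 0" "\<And>h. dist h 0 < d \<Longrightarrow> dist (g h) (g 0) < (T0 - Vb) / 2"
      using gcont eta unfolding continuous_at_eps_delta by metis
    have lowb: "\<And>h. h \<in> ball 0 d \<Longrightarrow> Vb + (T0 - Vb) / 2 \<le> g h"
    proof -
      fix h :: 'a assume "h \<in> ball 0 d"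
      then have "dist h 0 < d" by (simp add: dist_commute)
      then have "dist (g h) (g 0) < (T0 - Vb) / 2" by (rule d(2))
      then show "Vb + (T0 - Vb) / 2 \<le> g h" unfolding T0_def dist_real_def abs_less_iff by argo
    qed
    let ?Ve = "measure lborel (ball (0::'a) d)"
    have Ve: "emeasure lborel (ball (0::'a) d) = ennreal ?Ve" "?Ve > 0" using ball_measure_pos[OF d(1)] by auto
    have "ennreal (Vb + (T0 - Vb) / 2) = ennreal (1 / ?Ve) * (\<integral>\<^sup>+h. indicator (ball (0::'a) d) h * ennreal (Vb + (T0 - Vb) / 2) \<partial>lborel)"
    proof -
      have "(\<integral>\<^sup>+h. indicator (ball (0::'a) d) h * ennreal (Vb + (T0 - Vb) / 2) \<partial>lborel) = ennreal ?Ve * ennreal (Vb + (T0 - Vb) / 2)"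
        by (subst nn_integral_multc) (simp_all add: Ve)
      moreover have "ennreal (1 / ?Ve) * ennreal ?Ve = 1" using Ve
        by (subst ennreal_mult[symmetric]) auto
      ultimately show ?thesis by (simp add: mult.assoc[symmetric])
    qed
    also have "\<dots> \<le> ennreal (1 / ?Ve) * (\<integral>\<^sup>+h. indicator (ball (0::'a) d) h * ennreal (g h) \<partial>lborel)"
    proof (rule mult_left_mono[OF nn_integral_mono])
      fix h
      show "indicator (ball (0::'a) d) h * ennreal (Vb + (T0 - Vb) / 2) \<le> indicator (ball (0::'a) d) h * ennreal (g h)"
        using lowb[of h] by (cases "h \<in> ball 0 d") (auto intro: ennreal_leI)
    qed simp
    also have "\<dots> = (\<integral>\<^sup>+x. ?W x * ennreal (avgG G d (A x)) \<partial>lborel)"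
      by (subst avgG_tonelli[OF G nn bnd d(1) Ab]) (simp_all add: step2)
    also have "\<dots> \<le> ennreal Vb" using step1[OF d(1)] Vb by simp
    finally have "Vb + (T0 - Vb) / 2 \<le> Vb" using Vb by (subst (asm) ennreal_le_iff) auto
    then show False using eta by linarith
  qed
  then show ?thesis unfolding lhs Vb by (rule ennreal_leI)
qed

lemma diffquot_seq:
  fixes \<psi> :: "'a::euclidean_space \<Rightarrow> 'a"
  assumes D: "(\<psi> has_derivative A) (at x0)"
  shows "(\<lambda>k. (1 / (1 / real (Suc k))) *\<^sub>R (\<psi> (x0 + (1 / real (Suc k)) *\<^sub>R x) - \<psi> x0)) \<longlonglongrightarrow> A x"
proof (rule LIMSEQ_I)
  fix e :: real assume e: "e > 0"
  have lin: "bounded_linear A" using D by (simp add: has_derivative_at_alt)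
  let ?e' = "e / (2 * (norm x + 1))"
  have np: "2 * (norm x + 1) > 0" by (smt (verit) norm_ge_zero)
  have e': "?e' > 0" using e np by (rule divide_pos_pos)
  obtain d where d: "d > 0" "\<And>y. norm (y - x0) < d \<Longrightarrow> norm (\<psi> y - \<psi> x0 - A (y - x0)) \<le> ?e' * norm (y - x0)"
    using D e' unfolding has_derivative_at_alt by blast
  have nx1: "norm x + 1 > 0" by (smt (verit) norm_ge_zero)
  then have "d / (norm x + 1) > 0" using d(1) by simp
  then obtain n0 where n0: "inverse (real (Suc n0)) < d / (norm x + 1)"
    using reals_Archimedean by blast
  show "\<exists>no. \<forall>n\<ge>no. norm ((1 / (1 / real (Suc n))) *\<^sub>R (\<psi> (x0 + (1 / real (Suc n)) *\<^sub>R x) - \<psi> x0) - A x) < e"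
  proof (intro exI allI impI)
    fix n assume n: "n0 \<le> n"
    define t where "t = 1 / real (Suc n)"
    have t: "t > 0" "t \<le> inverse (real (Suc n0))" unfolding t_def using n
      by (auto simp: field_simps)
    have tx: "norm (t *\<^sub>R x) < d"
    proof -
      have "norm (t *\<^sub>R x) = t * norm x" using t by simp
      also have "\<dots> \<le> t * (norm x + 1)" using t by simp
      also have "\<dots> < d / (norm x + 1) * (norm x + 1)"
        using t n0 nx1 by (intro mult_strict_right_mono) auto
      also have "\<dots> = d" using nx1 by simp
      finally show ?thesis .
    qed
    have Atx: "A (t *\<^sub>R x) = t *\<^sub>R A x" using lin by (simp add: linear_scale bounded_linear.linear)
    have "(1 / t) *\<^sub>R (\<psi> (x0 + t *\<^sub>R x) - \<psi> x0) - A x = (1 / t) *\<^sub>R (\<psi> (x0 + t *\<^sub>R x) - \<psi> x0 - A (t *\<^sub>R x))"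
      using t by (simp add: Atx scaleR_diff_right)
    then have "norm ((1 / t) *\<^sub>R (\<psi> (x0 + t *\<^sub>R x) - \<psi> x0) - A x) = (1 / t) * norm (\<psi> (x0 + t *\<^sub>R x) - \<psi> x0 - A (t *\<^sub>R x))"
      using t by simp
    also have "\<dots> \<le> (1 / t) * (?e' * norm (t *\<^sub>R x))"
      using d(2)[of "x0 + t *\<^sub>R x"] tx t by (intro mult_left_mono) auto
    also have "\<dots> = ?e' * norm x" using t by simp
    also have "\<dots> < e"
    proof -
      have "?e' * norm x = e * (norm x / (2 * (norm x + 1)))" by simp
      also have "\<dots> < e * 1"
        using e nx1 by (intro mult_strict_left_mono) auto
      finally show ?thesis by simp
    qed
    finally show "norm ((1 / (1 / real (Suc n))) *\<^sub>R (\<psi> (x0 + (1 / real (Suc n)) *\<^sub>R x) - \<psi> x0) - A x) < e"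
      unfolding t_def .
  qed
qed

lemma diffeo_facts:
  fixes \<psi> :: "'a::euclidean_space \<Rightarrow> 'a"
  assumes "diffeomorphism \<psi>"
  shows "continuous_on UNIV \<psi>"
    and "\<exists>B. (\<psi> has_derivative frechet_derivative \<psi> (at x0)) (at x0) \<and> bounded_linear (frechet_derivative \<psi> (at x0))
          \<and> bounded_linear B \<and> (\<forall>h. frechet_derivative \<psi> (at x0) (B h) = h) \<and> (\<forall>h. B (frechet_derivative \<psi> (at x0) h) = h)"
proof -
  have bij: "bij \<psi>" and d1: "\<And>x. \<psi> differentiable (at x)" and d2: "\<And>x. inv \<psi> differentiable (at x)"
    using assms by (auto simp: diffeomorphism_def)
  show "continuous_on UNIV \<psi>"
    using d1 by (intro continuous_at_imp_continuous_on) (auto intro: differentiable_imp_continuous_within)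
  define A where "A = frechet_derivative \<psi> (at x0)"
  define B where "B = frechet_derivative (inv \<psi>) (at (\<psi> x0))"
  have DA: "(\<psi> has_derivative A) (at x0)" unfolding A_def using d1 frechet_derivative_works by blast
  have DB: "(inv \<psi> has_derivative B) (at (\<psi> x0))" unfolding B_def using d2 frechet_derivative_works by blast
  have iv: "inv \<psi> (\<psi> x0) = x0" using bij by (simp add: bij_is_inj)
  have c1: "((\<psi> \<circ> inv \<psi>) has_derivative (A \<circ> B)) (at (\<psi> x0))"
    using diff_chain_at[OF DB] DA iv by simp
  have "\<psi> \<circ> inv \<psi> = id" by (rule surj_iff[THEN iffD1, OF bij_is_surj[OF bij]])
  then have "(id has_derivative (A \<circ> B)) (at (\<psi> x0))" using c1 by simp
  then have AB: "A \<circ> B = id" using has_derivative_id[of "at (\<psi> x0)"] has_derivative_unique unfolding id_def by metis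
  have c2: "((inv \<psi> \<circ> \<psi>) has_derivative (B \<circ> A)) (at x0)"
    using diff_chain_at[OF DA DB] .
  have "inv \<psi> \<circ> \<psi> = id" by (rule inj_iff[THEN iffD1, OF bij_is_inj[OF bij]])
  then have "(id has_derivative (B \<circ> A)) (at x0)" using c2 by simp
  then have BA: "B \<circ> A = id" using has_derivative_id[of "at x0"] has_derivative_unique unfolding id_def by metis
  show "\<exists>B. (\<psi> has_derivative frechet_derivative \<psi> (at x0)) (at x0) \<and> bounded_linear (frechet_derivative \<psi> (at x0))
          \<and> bounded_linear B \<and> (\<forall>h. frechet_derivative \<psi> (at x0) (B h) = h) \<and> (\<forall>h. B (frechet_derivative \<psi> (at x0) h) = h)"
    unfolding A_def[symmetric]
  proof (intro exI[of _ B] conjI allI)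
    show "(\<psi> has_derivative A) (at x0)" by (rule DA)
    show "bounded_linear A" using DA by (rule has_derivative_bounded_linear)
    show "bounded_linear B" using DB by (rule has_derivative_bounded_linear)
    show "A (B h) = h" for h using AB by (metis comp_apply id_apply)
    show "B (A h) = h" for h using BA by (metis comp_apply id_apply)
  qed
qed

lemma avg_norm_cong_AE:
  assumes "AE x in lebesgue. g x = g' x"
  shows "orlicz_avg_norm \<Phi> g B = orlicz_avg_norm \<Phi> g' B"
proof -
  have "(\<integral>\<^sup>+ x\<in>B. ennreal (\<Phi> (\<bar>g x\<bar> / l)) \<partial>lebesgue) = (\<integral>\<^sup>+ x\<in>B. ennreal (\<Phi> (\<bar>g' x\<bar> / l)) \<partial>lebesgue)" for l
    using assms by (intro nn_integral_cong_AE) auto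
  then show ?thesis unfolding orlicz_avg_norm_def by simp
qed

lemma fix_limit:
  fixes H :: "'a::euclidean_space \<Rightarrow> real"
  assumes H[measurable]: "H \<in> borel_measurable borel" and nn: "\<And>z. H z \<ge> 0"
    and hyp: "\<And>n::nat. (\<integral>\<^sup>+x. indicator (ball a r) x * ennreal (min (real n) (H x)) \<partial>lborel) \<le> Bd"
  shows "(\<integral>\<^sup>+x. indicator (ball a r) x * ennreal (H x) \<partial>lborel) \<le> Bd"
proof -
  let ?u = "\<lambda>n x. indicator (ball a r) x * ennreal (min (real n) (H x))"
  have "(\<integral>\<^sup>+x. indicator (ball a r) x * ennreal (H x) \<partial>lborel) = (\<integral>\<^sup>+x. liminf (\<lambda>n. ?u n x) \<partial>lborel)"
  proof (intro nn_integral_cong)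
    fix x
    obtain n0 where n0: "H x \<le> real n0" using real_arch_simple by blast
    have "eventually (\<lambda>n. ?u n x = indicator (ball a r) x * ennreal (H x)) sequentially"
      unfolding eventually_sequentially
    proof (intro exI[of _ n0] allI impI)
      fix n assume "n0 \<le> n"
      then have "H x \<le> real n" using n0 by (meson of_nat_le_iff order_trans)
      then show "?u n x = indicator (ball a r) x * ennreal (H x)" by simp
    qed
    then have "(\<lambda>n. ?u n x) \<longlonglongrightarrow> indicator (ball a r) x * ennreal (H x)" by (rule tendsto_eventually)
    then show "indicator (ball a r) x * ennreal (H x) = liminf (\<lambda>n. ?u n x)"
      by (simp add: lim_imp_Liminf)
  qed
  also have "\<dots> \<le> liminf (\<lambda>n. \<integral>\<^sup>+x. ?u n x \<partial>lborel)"
    by (rule nn_integral_liminf) measurable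
  also have "\<dots> \<le> limsup (\<lambda>n. \<integral>\<^sup>+x. ?u n x \<partial>lborel)"
    by (rule Liminf_le_Limsup) simp
  also have "\<dots> \<le> Bd"
    by (rule Limsup_bounded, rule always_eventually, rule allI, rule hyp)
  finally show ?thesis .
qed

lemma main_fixed:
  fixes \<Phi> \<phi> :: "real \<Rightarrow> real" and \<psi> A B :: "'a::euclidean_space \<Rightarrow> 'a" and f :: "'a \<Rightarrow> real"
  assumes Y: "young_function \<Phi>"
    and pos: "\<And>r. r > 0 \<Longrightarrow> \<phi> r > 0"
    and C1: "C1 > 0" "\<And>r s. r > 0 \<Longrightarrow> s > 0 \<Longrightarrow> \<phi> (r * s) \<le> C1 * \<phi> r * \<phi> s"
    and C3: "C3 > 0" "\<And>r. r > 0 \<Longrightarrow> \<phi> (1 / r) \<le> C3 / \<phi> r"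
    and Cp: "Cp > 0" "\<forall>f \<in> orlicz_morrey_space \<Phi> \<phi>.
           f \<circ> \<psi> \<in> orlicz_morrey_space \<Phi> \<phi> \<and>
           orlicz_morrey_norm \<Phi> \<phi> (f \<circ> \<psi>) \<le> ennreal Cp * orlicz_morrey_norm \<Phi> \<phi> f"
    and psi_cont: "continuous_on UNIV \<psi>"
    and DA: "(\<psi> has_derivative A) (at x0)" and linA: "bounded_linear A" and linB: "bounded_linear B"
    and AB: "\<And>h. A (B h) = h" and BA: "\<And>h. B (A h) = h"
    and f: "f \<in> orlicz_morrey_space \<Phi> \<phi>"
  shows "orlicz_morrey_norm \<Phi> \<phi> (\<lambda>x. f (A x)) \<le> ennreal (C1 * C1 * C3 * Cp) * orlicz_morrey_norm \<Phi> \<phi> f"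
proof -
  define K where "K = C1 * C1 * C3 * Cp"
  have K: "K > 0" unfolding K_def using C1 C3 Cp by simp
  have fl: "f \<in> borel_measurable lebesgue" and fin: "orlicz_morrey_norm \<Phi> \<phi> f < \<infinity>"
    using f by (auto simp: orlicz_morrey_space_def)
  obtain f' where f'l: "f' \<in> borel_measurable lborel" and ae: "AE x in lborel. f x = f' x"
    using completion_ex_borel_measurable_real[OF fl] by blast
  have f'b[measurable]: "f' \<in> borel_measurable borel" using f'l by simp
  have aeL: "AE x in lebesgue. f x = f' x" using ae by (rule AE_completion)
  have norm_eq: "orlicz_morrey_norm \<Phi> \<phi> f = orlicz_morrey_norm \<Phi> \<phi> f'"
    unfolding orlicz_morrey_norm_def using avg_norm_cong_AE[OF aeL] by simp
  have aeA: "AE x in lebesgue. f (A x) = f' (A x)"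
  proof -
    from ae obtain N where N: "{x \<in> space lborel. \<not> f x = f' x} \<subseteq> N" "emeasure lborel N = 0" "N \<in> sets lborel"
      by (rule AE_E)
    have "N \<in> null_sets lebesgue" using N by (auto intro: null_sets_completionI)
    then have "negligible N" by (simp add: negligible_iff_null_sets)
    then have "negligible (B ` N)"
      using linB by (intro negligible_differentiable_image_negligible bounded_linear_imp_differentiable_on) auto
    then have nBN: "B ` N \<in> null_sets lebesgue" by (simp add: negligible_iff_null_sets)
    show ?thesis
    proof (rule AE_I'[OF nBN], safe)
      fix x assume "f (A x) \<noteq> f' (A x)"
      then have "A x \<in> N" using N(1) by auto
      then show "x \<in> B ` N" using BA[of x] by (metis image_eqI)
    qed
  qed
  have normA_eq: "orlicz_morrey_norm \<Phi> \<phi> (\<lambda>x. f (A x)) = orlicz_morrey_norm \<Phi> \<phi> (\<lambda>x. f' (A x))"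
    unfolding orlicz_morrey_norm_def using avg_norm_cong_AE[OF aeA] by simp
  define M where "M = orlicz_morrey_norm \<Phi> \<phi> f'"
  have finM: "M < \<infinity>" using fin norm_eq M_def by simp
  define Mr where "Mr = enn2real M"
  have MMr: "M = ennreal Mr" unfolding Mr_def using finM by simp
  have Mr0: "Mr \<ge> 0" unfolding Mr_def by simp
  have Ab[measurable]: "A \<in> borel_measurable borel"
    using linA by (intro borel_measurable_continuous_onI continuous_at_imp_continuous_on) (auto intro: linear_continuous_at)
  have psib[measurable]: "\<psi> \<in> borel_measurable borel"
    using psi_cont by (rule borel_measurable_continuous_onI)
  define \<Theta> where "\<Theta> k x = (1 / (1 / real (Suc k))) *\<^sub>R (\<psi> (x0 + (1 / real (Suc k)) *\<^sub>R x) - \<psi> x0)" for k x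
  have Thb[measurable]: "\<Theta> k \<in> borel_measurable borel" for k unfolding \<Theta>_def by measurable
  have Thlim: "(\<lambda>k. \<Theta> k x) \<longlonglongrightarrow> A x" for x unfolding \<Theta>_def by (rule diffquot_seq[OF DA])
  have ballbound: "orlicz_avg_norm \<Phi> (\<lambda>x. f' (A x)) (ball a r) \<le> ennreal (\<phi> r) * (ennreal K * M)"
    if r: "r > 0" for a r
  proof -
    have "orlicz_avg_norm \<Phi> (\<lambda>x. f' (A x)) (ball a r) \<le> ennreal (K * \<phi> r * Mr)"
    proof (rule norm_le)
      show "K * \<phi> r * Mr \<ge> 0" using K pos[OF r] Mr0 by simp
      fix L assume L: "L > K * \<phi> r * Mr"
      have L0: "L > 0" using L K pos[OF r] Mr0 by (smt (verit) mult_nonneg_nonneg)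
      have LK: "ennreal (C1 * C1 * C3 * Cp * \<phi> r) * orlicz_morrey_norm \<Phi> \<phi> f' < ennreal L"
      proof -
        have "ennreal (C1 * C1 * C3 * Cp * \<phi> r) * orlicz_morrey_norm \<Phi> \<phi> f' = ennreal (K * \<phi> r * Mr)"
          unfolding M_def[symmetric] MMr K_def using K pos[OF r] Mr0 C1 C3 Cp
          by (subst ennreal_mult[symmetric]) (auto simp: K_def)
        also have "\<dots> < ennreal L" using L L0 by (intro ennreal_lessI)
        finally show ?thesis .
      qed
      define G where "G n y = min (real n) (\<Phi> (\<bar>f' y\<bar> / L))" for n :: nat and y
      have Phb: "(\<lambda>y. \<Phi> (\<bar>f' y\<bar> / L)) \<in> borel_measurable borel"
        using young_comp_measurable[OF Y f'b, of L] L0 by simp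
      have Gb[measurable]: "G n \<in> borel_measurable borel" for n
        unfolding G_def by (intro borel_measurable_min) (simp_all add: Phb)
      have Gnn: "G n y \<ge> 0" for n y unfolding G_def using young_nonneg[OF Y, of "\<bar>f' y\<bar> / L"] L0 by simp
      have Gbd: "G n y \<le> real n" for n y unfolding G_def by simp
      have zoom: "(\<integral>\<^sup>+x. indicator (ball a r) x * ennreal (G n (\<Theta> k x + h)) \<partial>lborel) \<le> emeasure lborel (ball a r)" for n k h
      proof -
        have "(\<integral>\<^sup>+x. indicator (ball a r) x * ennreal (G n (\<Theta> k x + h)) \<partial>lborel)
            \<le> (\<integral>\<^sup>+x. ennreal (\<Phi> (\<bar>f' (h + \<Theta> k x)\<bar> / L)) * indicator (ball a r) x \<partial>lborel)"
          by (intro nn_integral_mono) (auto simp: G_def indicator_def add.commute intro: ennreal_leI)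
        also have "\<dots> = (\<integral>\<^sup>+x\<in>ball a r. ennreal (\<Phi> (\<bar>f' (h + \<Theta> k x)\<bar> / L)) \<partial>lebesgue)"
          by (simp add: nn_integral_completion)
        also have "\<dots> \<le> emeasure lebesgue (ball a r)"
          unfolding \<Theta>_def
          by (rule zoom_bound[OF Y pos C1 C3 Cp psi_cont f'b _ _ r L0 LK])
             (use fin norm_eq in simp_all)
        also have "\<dots> = emeasure lborel (ball a r)" by (simp add: emeasure_completion)
        finally show ?thesis .
      qed
      have lim: "(\<integral>\<^sup>+x. indicator (ball a r) x * ennreal (G n (A x)) \<partial>lborel) \<le> emeasure lborel (ball a r)" for n
        by (rule core_limit[OF Gb Gnn Gbd linA linB AB Thb Thlim zoom r])
      have fA[measurable]: "(\<lambda>x. \<Phi> (\<bar>f' (A x)\<bar> / L)) \<in> borel_measurable borel"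
        using L0 by (intro young_comp_measurable[OF Y]) measurable
      have "(\<integral>\<^sup>+x. indicator (ball a r) x * ennreal (\<Phi> (\<bar>f' (A x)\<bar> / L)) \<partial>lborel) \<le> emeasure lborel (ball a r)"
      proof (rule fix_limit[OF fA])
        show "\<Phi> (\<bar>f' (A z)\<bar> / L) \<ge> 0" for z using young_nonneg[OF Y, of "\<bar>f' (A z)\<bar> / L"] L0 by simp
        show "(\<integral>\<^sup>+x. indicator (ball a r) x * ennreal (min (real n) (\<Phi> (\<bar>f' (A x)\<bar> / L))) \<partial>lborel) \<le> emeasure lborel (ball a r)" for n
          using lim[of n] unfolding G_def .
      qed
      then have le: "(\<integral>\<^sup>+x\<in>ball a r. ennreal (\<Phi> (\<bar>f' (A x)\<bar> / L)) \<partial>lebesgue) \<le> emeasure lebesgue (ball a r)"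
        by (simp add: nn_integral_completion emeasure_completion mult.commute)
      show "avgQ \<Phi> (\<lambda>x. f' (A x)) (ball a r) L \<le> 1"
        unfolding avgQ_def
        using emeasure_ball_pos_fin[OF r, of a] le by (intro divide_le_posI_ennreal) (auto simp: zero_less_iff_neq_zero)
    qed
    also have "\<dots> = ennreal (\<phi> r) * (ennreal K * M)"
      unfolding MMr using K pos[OF r] Mr0
      by (simp add: ennreal_mult[symmetric] mult_ac)
    finally show ?thesis .
  qed
  have "orlicz_morrey_norm \<Phi> \<phi> (\<lambda>x. f' (A x)) \<le> ennreal K * M"
    by (rule morrey_le[OF pos ballbound])
  then show ?thesis unfolding normA_eq M_def norm_eq K_def .
qed

theorem proposition4p2:
  fixes \<Phi> \<phi> :: "real \<Rightarrow> real" and p :: real and \<psi> :: "'a::euclidean_space \<Rightarrow> 'a"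
  assumes "young_function \<Phi>"
    and "G_dec_2 \<phi>"
    and "p \<ge> 1"
    and "\<exists>C>0. \<forall>t\<ge>1. \<Phi> t \<le> C * t powr p"
    and "\<exists>C>0. \<forall>r>0. r powr (- real DIM('a) / p) \<le> C * \<phi> r"
    and "diffeomorphism \<psi>"
    and "\<exists>C>0. \<forall>f \<in> orlicz_morrey_space \<Phi> \<phi>.
           f \<circ> \<psi> \<in> orlicz_morrey_space \<Phi> \<phi> \<and>
           orlicz_morrey_norm \<Phi> \<phi> (f \<circ> \<psi>) \<le> ennreal C * orlicz_morrey_norm \<Phi> \<phi> f"
  shows "\<exists>C>0. \<forall>x0. \<forall>f \<in> orlicz_morrey_space \<Phi> \<phi>.
           orlicz_morrey_norm \<Phi> \<phi> (\<lambda>x. f (frechet_derivative \<psi> (at x0) x))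
             \<le> ennreal C * orlicz_morrey_norm \<Phi> \<phi> f"
proof -
  note g = assms(2)[unfolded G_dec_2_def]
  have pos: "\<And>r. r > 0 \<Longrightarrow> \<phi> r > 0" using conjunct1[OF g] by blast
  have e1: "\<exists>C>0. \<forall>r>0. \<forall>s>0. \<phi> (r * s) \<le> C * \<phi> r * \<phi> s"
    by (rule conjunct1[OF conjunct2[OF conjunct2[OF g]]])
  obtain C1 where C1a: "C1 > 0" and C1b: "\<forall>r>0. \<forall>s>0. \<phi> (r * s) \<le> C1 * \<phi> r * \<phi> s"
    using e1 by blast
  have C1: "C1 > 0" "\<And>r s. r > 0 \<Longrightarrow> s > 0 \<Longrightarrow> \<phi> (r * s) \<le> C1 * \<phi> r * \<phi> s"
    using C1a C1b by blast+
  have e3: "\<exists>C>0. \<forall>r>0. \<phi> (1 / r) \<le> C / \<phi> r"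
    by (rule conjunct2[OF conjunct2[OF conjunct2[OF conjunct2[OF conjunct2[OF g]]]]])
  obtain C3 where C3a: "C3 > 0" and C3b: "\<forall>r>0. \<phi> (1 / r) \<le> C3 / \<phi> r"
    using e3 by blast
  have C3: "C3 > 0" "\<And>r. r > 0 \<Longrightarrow> \<phi> (1 / r) \<le> C3 / \<phi> r"
    using C3a C3b by blast+
  obtain Cp where Cp: "Cp > 0" "\<forall>f \<in> orlicz_morrey_space \<Phi> \<phi>.
           f \<circ> \<psi> \<in> orlicz_morrey_space \<Phi> \<phi> \<and>
           orlicz_morrey_norm \<Phi> \<phi> (f \<circ> \<psi>) \<le> ennreal Cp * orlicz_morrey_norm \<Phi> \<phi> f"
    using assms(7) by blast
  have psic: "continuous_on UNIV \<psi>" by (rule diffeo_facts(1)[OF assms(6)])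
  show ?thesis
  proof (intro exI[of _ "C1 * C1 * C3 * Cp"] conjI allI ballI)
    show "C1 * C1 * C3 * Cp > 0" using C1 C3 Cp by simp
    fix x0 :: 'a and f :: "'a \<Rightarrow> real" assume f: "f \<in> orlicz_morrey_space \<Phi> \<phi>"
    obtain B where B: "(\<psi> has_derivative frechet_derivative \<psi> (at x0)) (at x0)" "bounded_linear (frechet_derivative \<psi> (at x0))"
          "bounded_linear B" "\<And>h. frechet_derivative \<psi> (at x0) (B h) = h" "\<And>h. B (frechet_derivative \<psi> (at x0) h) = h"
      using diffeo_facts(2)[OF assms(6), of x0] by blast
    show "orlicz_morrey_norm \<Phi> \<phi> (\<lambda>x. f (frechet_derivative \<psi> (at x0) x))
             \<le> ennreal (C1 * C1 * C3 * Cp) * orlicz_morrey_norm \<Phi> \<phi> f"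
      by (rule main_fixed[OF assms(1) pos C1 C3 Cp psic B f])
  qed
qed


end
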